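(* Let $0 \leq a \leq b \leq 1$ and $r \in (0,3)$. For any $\rho \geq r$ and $t \geq \frac1{200}$, \[ K_t(\rho) = \begin{cases} O\!\left(\frac{t}{r^2}\exp\!\Big(-t^2\delta_b^2 - \frac{\rho^{4/3}}{8t^{2/3}}\Big)\right) & \text{if } \rho \geq 6t^2,\\[2mm] O\!\left(\frac{t}{r^2}\exp\!\Big(-t^2\delta_b^2 + t^2 - \frac{\rho^{4/3}}{8t^{2/3}}\Big)\right) & \text{if } \rho \leq 6t^2, \end{cases} \] where $\delta_b = \max(\frac14-b,0)$.
   Context: For $0\le a\le b$ and $t>0$, let $f_t(\lambda) = \frac{t}{\sqrt\pi}\int_a^b\exp(-t^2(\lambda-\mu)^2)\,d\mu$, $h_t(r) = f_t(\frac14+r^2)$, $g_t(u) = \frac{1}{2\pi}\int_{-\infty}^{+\infty}h_t(r)e^{iru}\,dr$, and define the kernel \[ K_t(\rho) = -\frac{1}{\sqrt2\,\pi}\int_\rho^{+\infty}\frac{g_t'(u)}{\sqrt{\cosh u - \cosh\rho}}\,du, \qquad \rho>0. \] $T_1 = O(T_2)$ means $|T_1|\le CT_2$ with a universal constant $C$ independent of all parameters. *)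

theory Defs
  imports "HOL-Analysis.Analysis"
begin

definition f_t :: "real \<Rightarrow> real \<Rightarrow> real \<Rightarrow> real \<Rightarrow> real" where
  "f_t a b t lam = t / sqrt pi * integral {a..b} (\<lambda>mu. exp (- (t\<^sup>2 * (lam - mu)\<^sup>2)))"

definition h_t :: "real \<Rightarrow> real \<Rightarrow> real \<Rightarrow> real \<Rightarrow> real" where
  "h_t a b t r = f_t a b t (1/4 + r\<^sup>2)"

definition g_t :: "real \<Rightarrow> real \<Rightarrow> real \<Rightarrow> real \<Rightarrow> complex" where
  "g_t a b t u = complex_of_real (1 / (2 * pi)) *
     (LINT r|lborel. complex_of_real (h_t a b t r) * exp (\<i> * complex_of_real (r * u)))"

definition K_t :: "real \<Rightarrow> real \<Rightarrow> real \<Rightarrow> real \<Rightarrow> complex" where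
  "K_t a b t rho = complex_of_real (- 1 / (sqrt 2 * pi)) *
     (LINT u:{rho<..}|lborel. vector_derivative (g_t a b t) (at u)
                                / complex_of_real (sqrt (cosh u - cosh rho)))"

end

theory Submission
  imports Defs "HOL-Complex_Analysis.Complex_Analysis" "HOL-Probability.Probability" "HOL-Real_Asymp.Real_Asymp"
begin


definition EE :: "real \<Rightarrow> complex \<Rightarrow> real \<Rightarrow> complex" where
  "EE t z mu = exp (- (of_real (t\<^sup>2) * (1/4 + z\<^sup>2 - of_real mu)\<^sup>2))"

definition HH :: "real \<Rightarrow> real \<Rightarrow> real \<Rightarrow> complex \<Rightarrow> complex" where
  "HH a b t z = of_real (t / sqrt pi) * integral {a..b} (EE t z)"

lemma EE_cont: "continuous_on UNIV (\<lambda>p::complex\<times>real. EE t (fst p) (snd p))"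
  unfolding EE_def by (intro continuous_intros)

lemma HH_holo: "HH a b t holomorphic_on UNIV"
proof -
  have "(\<lambda>z. integral (cbox a b) (EE t z)) holomorphic_on UNIV"
  proof (rule leibniz_rule_holomorphic[where fx = "\<lambda>z mu. EE t z mu * (- (of_real (t\<^sup>2) * (2 * (1/4 + z\<^sup>2 - of_real mu) * (2 * z))))"])
    fix z :: complex and mu :: real
    show "((\<lambda>z. EE t z mu) has_field_derivative EE t z mu * (- (of_real (t\<^sup>2) * (2 * (1/4 + z\<^sup>2 - of_real mu) * (2 * z))))) (at z within UNIV)"
      unfolding EE_def by (auto intro!: derivative_eq_intros simp: power2_eq_square algebra_simps)
  next
    fix z :: complex
    show "EE t z integrable_on cbox a b"
      unfolding EE_def by (intro integrable_continuous continuous_intros)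
  next
    show "continuous_on (UNIV \<times> cbox a b) (\<lambda>(z, mu). EE t z mu * (- (of_real (t\<^sup>2) * (2 * (1/4 + z\<^sup>2 - of_real mu) * (2 * z)))))"
      unfolding EE_def case_prod_unfold by (intro continuous_intros)
  qed auto
  then show ?thesis unfolding HH_def by (intro holomorphic_intros) simp
qed

lemma HH_real: "HH a b t (of_real r) = of_real (h_t a b t r)"
proof -
  have i: "(\<lambda>mu. exp (- (t\<^sup>2 * ((1/4 + r\<^sup>2) - mu)\<^sup>2))) integrable_on {a..b}"
    by (intro integrable_continuous_interval continuous_intros)
  have "EE t (of_real r) = (\<lambda>mu. of_real (exp (- (t\<^sup>2 * ((1/4 + r\<^sup>2) - mu)\<^sup>2))))"
    by (simp add: EE_def fun_eq_iff flip: exp_of_real)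
  moreover have "integral {a..b} (EE t (of_real r)) = of_real (integral {a..b} (\<lambda>mu. exp (- (t\<^sup>2 * ((1/4 + r\<^sup>2) - mu)\<^sup>2))))"
  proof -
    have "((\<lambda>mu. complex_of_real (exp (- (t\<^sup>2 * ((1/4 + r\<^sup>2) - mu)\<^sup>2)))) has_integral
       complex_of_real (integral {a..b} (\<lambda>mu. exp (- (t\<^sup>2 * ((1/4 + r\<^sup>2) - mu)\<^sup>2))))) {a..b}"
      by (rule has_integral_of_real[OF integrable_integral[OF i]])
    then show ?thesis using \<open>EE t (of_real r) = _\<close> by (simp add: integral_unique)
  qed
  ultimately show ?thesis by (simp add: HH_def h_t_def f_t_def)
qed


lemma key_alg:
  fixes c q y b :: real
  assumes "c \<ge> 1/4 - b" "c \<le> 1/4" "c \<ge> -3/4" "q \<ge> - y\<^sup>2"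
  shows "(c + q)\<^sup>2 - 4 * (q + y\<^sup>2) * y\<^sup>2 \<ge> (max (1/4 - b) 0)\<^sup>2 + q\<^sup>2/4 - 20 * y^4 - y\<^sup>2/2 - 9/16"
proof -
  have A: "(c + q)\<^sup>2 \<ge> (max (1/4 - b) 0)\<^sup>2 - y\<^sup>2/2 + q\<^sup>2/2 - 9/16"
  proof (cases "c \<ge> 0")
    case True
    have "(max (1/4 - b) 0)\<^sup>2 \<le> c\<^sup>2" using True assms(1)
      by (intro power_mono) auto
    moreover have "2*c*q \<ge> - y\<^sup>2/2"
    proof -
      have "2*c*q \<ge> 2*c*(-y\<^sup>2)" using True assms(4) by (intro mult_left_mono) auto
      moreover have "2*c*y\<^sup>2 \<le> 2*(1/4)*y\<^sup>2" using True assms(2) by (intro mult_right_mono) auto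
      ultimately show ?thesis by simp
    qed
    moreover have "(c + q)\<^sup>2 = c\<^sup>2 + 2*c*q + q\<^sup>2" by (simp add: power2_eq_square algebra_simps)
    moreover have "0 \<le> q\<^sup>2" by simp
    ultimately show ?thesis by linarith
  next
    case False
    then have m: "max (1/4 - b) 0 = 0" using assms(1) by simp
    have "c\<^sup>2 \<le> 9/16"
    proof -
      have "(-c)\<^sup>2 \<le> (3/4)\<^sup>2" using False assms(3) by (intro power_mono) auto
      then show ?thesis by (simp add: power2_eq_square)
    qed
    moreover have "(c+q)\<^sup>2 \<ge> q\<^sup>2/2 - c\<^sup>2"
    proof -
      have "(c+q)\<^sup>2 - q\<^sup>2/2 + c\<^sup>2 = (q+2*c)\<^sup>2/2" by (simp add: power2_eq_square algebra_simps)
      moreover have "0 \<le> (q+2*c)\<^sup>2/2" by simp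
      ultimately show ?thesis by linarith
    qed
    moreover have "0 \<le> y\<^sup>2" by simp
    moreover have "(max (1/4 - b) 0)\<^sup>2 = 0" using m by simp
    ultimately show ?thesis by linarith
  qed
  have B: "q\<^sup>2/2 - 4 * (q + y\<^sup>2) * y\<^sup>2 \<ge> q\<^sup>2/4 - 20 * y^4"
  proof -
    have "q\<^sup>2/2 - 4 * (q + y\<^sup>2) * y\<^sup>2 - (q\<^sup>2/4 - 20 * y^4) = (q/2 - 4*y\<^sup>2)\<^sup>2"
      by (simp add: power2_eq_square power4_eq_xxxx algebra_simps)
    moreover have "0 \<le> (q/2 - 4*y\<^sup>2)\<^sup>2" by simp
    ultimately show ?thesis by linarith
  qed
  show ?thesis using A B by linarith
qed
lemma Re_W2:
  "Re ((1/4 + (Complex r y)\<^sup>2 - of_real mu)\<^sup>2) = (1/4 - mu + r\<^sup>2 - y\<^sup>2)\<^sup>2 - 4 * r\<^sup>2 * y\<^sup>2"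
proof -
  define w where "w = 1/4 + (Complex r y)\<^sup>2 - of_real mu"
  have "Re w = 1/4 - mu + r\<^sup>2 - y\<^sup>2" "Im w = 2*r*y" unfolding w_def by (simp_all add: power2_eq_square)
  moreover have "Re (w\<^sup>2) = Re w * Re w - Im w * Im w" by (simp add: power2_eq_square)
  ultimately have "Re (w\<^sup>2) = (1/4 - mu + r\<^sup>2 - y\<^sup>2) * (1/4 - mu + r\<^sup>2 - y\<^sup>2) - (2*r*y) * (2*r*y)"
    by simp
  also have "\<dots> = (1/4 - mu + r\<^sup>2 - y\<^sup>2)\<^sup>2 - 4 * r\<^sup>2 * y\<^sup>2" by (simp add: power2_eq_square)
  finally show ?thesis unfolding w_def .
qed

lemma EE_norm_le:
  assumes "0 \<le> a" "a \<le> mu" "mu \<le> b" "b \<le> 1"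
  shows "norm (EE t (Complex r y) mu) \<le>
    exp (- (t\<^sup>2 * ((max (1/4 - b) 0)\<^sup>2 + (r\<^sup>2 - y\<^sup>2)\<^sup>2/4 - 20 * y^4 - y\<^sup>2/2 - 9/16)))"
proof -
  have "norm (EE t (Complex r y) mu) = exp (- (t\<^sup>2 * Re ((1/4 + (Complex r y)\<^sup>2 - of_real mu)\<^sup>2)))"
    unfolding EE_def norm_exp_eq_Re by (simp del: Complex_eq)
  also have "\<dots> \<le> exp (- (t\<^sup>2 * ((max (1/4 - b) 0)\<^sup>2 + (r\<^sup>2 - y\<^sup>2)\<^sup>2/4 - 20 * y^4 - y\<^sup>2/2 - 9/16)))"
  proof -
    have "(1/4 - mu + (r\<^sup>2 - y\<^sup>2))\<^sup>2 - 4 * ((r\<^sup>2 - y\<^sup>2) + y\<^sup>2) * y\<^sup>2 \<ge> (max (1/4 - b) 0)\<^sup>2 + (r\<^sup>2 - y\<^sup>2)\<^sup>2/4 - 20 * y^4 - y\<^sup>2/2 - 9/16"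
      by (rule key_alg) (use assms in auto)
    then have "Re ((1/4 + (Complex r y)\<^sup>2 - of_real mu)\<^sup>2) \<ge> (max (1/4 - b) 0)\<^sup>2 + (r\<^sup>2 - y\<^sup>2)\<^sup>2/4 - 20 * y^4 - y\<^sup>2/2 - 9/16"
      unfolding Re_W2 by (simp add: algebra_simps)
    then show ?thesis by (subst exp_le_cancel_iff) (intro le_imp_neg_le mult_left_mono; simp)
  qed
  finally show ?thesis .
qed

lemma HH_norm_le:
  assumes "0 \<le> a" "a \<le> b" "b \<le> 1" "t \<ge> 0"
  shows "norm (HH a b t (Complex r y)) \<le>
    t * exp (- (t\<^sup>2 * ((max (1/4 - b) 0)\<^sup>2 + (r\<^sup>2 - y\<^sup>2)\<^sup>2/4 - 20 * y^4 - y\<^sup>2/2 - 9/16)))"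
proof -
  let ?B = "exp (- (t\<^sup>2 * ((max (1/4 - b) 0)\<^sup>2 + (r\<^sup>2 - y\<^sup>2)\<^sup>2/4 - 20 * y^4 - y\<^sup>2/2 - 9/16)))"
  have "norm (integral {a..b} (EE t (Complex r y))) \<le> ?B * (b - a)"
  proof (rule integral_bound)
    show "continuous_on {a..b} (EE t (Complex r y))" unfolding EE_def by (intro continuous_intros)
    fix mu assume "mu \<in> {a..b}"
    then show "norm (EE t (Complex r y) mu) \<le> ?B" using assms by (intro EE_norm_le) auto
  qed (use assms in auto)
  also have "\<dots> \<le> ?B * sqrt pi"
  proof -
    have "b - a \<le> 1" using assms by simp
    also have "1 \<le> sqrt pi" using pi_gt3 by simp
    finally show ?thesis by (intro mult_left_mono) auto
  qed
  finally have "norm (integral {a..b} (EE t (Complex r y))) \<le> ?B * sqrt pi" .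
  then have "t / sqrt pi * norm (integral {a..b} (EE t (Complex r y))) \<le> t / sqrt pi * (?B * sqrt pi)"
    using assms by (intro mult_left_mono) auto
  moreover have "t / sqrt pi * (?B * sqrt pi) = t * ?B" by simp
  moreover have "norm (HH a b t (Complex r y)) = t / sqrt pi * norm (integral {a..b} (EE t (Complex r y)))"
    unfolding HH_def norm_mult using assms by (simp add: norm_divide)
  ultimately show ?thesis by simp
qed


lemma h_cont: "continuous_on UNIV (h_t a b t)"
proof -
  have "h_t a b t = (\<lambda>r. Re (HH a b t (of_real r)))" by (simp add: HH_real fun_eq_iff)
  moreover have "continuous_on UNIV (\<lambda>r::real. Re (HH a b t (of_real r)))"
    by (intro continuous_intros continuous_on_compose2[OF holomorphic_on_imp_continuous_on[OF HH_holo]]) auto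
  ultimately show ?thesis by simp
qed

lemma quart_bound:
  fixes t r \<alpha> :: real
  assumes "t \<ge> 1/200" "\<alpha> > 0"
  shows "exp (- (\<alpha> * t\<^sup>2 * r^4)) \<le> exp (2500/\<alpha>) * exp (- (r\<^sup>2/2))"
proof -
  have "t\<^sup>2 \<ge> (1/200)\<^sup>2" using assms by (intro power_mono) auto
  then have "\<alpha> * t\<^sup>2 * r^4 \<ge> \<alpha> * (1/40000) * r^4" using assms
    by (intro mult_right_mono mult_left_mono) (auto simp: power2_eq_square)
  moreover have "\<alpha> * (1/40000) * r^4 - r\<^sup>2/2 + 2500/\<alpha> = \<alpha>/40000 * (r\<^sup>2 - 10000/\<alpha>)\<^sup>2"
    using assms by (simp add: power2_eq_square power4_eq_xxxx field_simps)
  moreover have "\<alpha>/40000 * (r\<^sup>2 - 10000/\<alpha>)\<^sup>2 \<ge> 0" using assms by simp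
  ultimately have "- (\<alpha> * t\<^sup>2 * r^4) \<le> 2500/\<alpha> + (- (r\<^sup>2/2))" by linarith
  then show ?thesis by (simp flip: exp_add)
qed

lemma h_bound:
  assumes "0 \<le> a" "a \<le> b" "b \<le> 1" "t \<ge> 1/200"
  shows "\<bar>h_t a b t r\<bar> \<le> t * exp (t\<^sup>2 * (9/16 - (max (1/4 - b) 0)\<^sup>2)) * exp 10000 * exp (- (r\<^sup>2/2))"
proof -
  let ?d = "max (1/4 - b) 0"
  have "norm (HH a b t (Complex r 0)) \<le> t * exp (- (t\<^sup>2 * (?d\<^sup>2 + (r\<^sup>2 - 0\<^sup>2)\<^sup>2/4 - 20 * 0^4 - 0\<^sup>2/2 - 9/16)))"
    using assms by (intro HH_norm_le) auto
  moreover have "HH a b t (Complex r 0) = of_real (h_t a b t r)"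
    using HH_real[of a b t r] by (simp add: complex_of_real_def)
  ultimately have 1: "\<bar>h_t a b t r\<bar> \<le> t * exp (- (t\<^sup>2 * (?d\<^sup>2 + (r\<^sup>2)\<^sup>2/4 - 9/16)))" by simp
  have "exp (- (t\<^sup>2 * (?d\<^sup>2 + (r\<^sup>2)\<^sup>2/4 - 9/16))) = exp (t\<^sup>2 * (9/16 - ?d\<^sup>2)) * exp (- ((1/4) * t\<^sup>2 * r^4))"
    by (simp add: algebra_simps power2_eq_square power4_eq_xxxx flip: exp_add)
  also have "\<dots> \<le> exp (t\<^sup>2 * (9/16 - ?d\<^sup>2)) * (exp (2500/(1/4)) * exp (- (r\<^sup>2/2)))"
    by (intro mult_left_mono quart_bound) (use assms in auto)
  finally have 2: "exp (- (t\<^sup>2 * (?d\<^sup>2 + (r\<^sup>2)\<^sup>2/4 - 9/16))) \<le> exp (t\<^sup>2 * (9/16 - ?d\<^sup>2)) * (exp 10000 * exp (- (r\<^sup>2/2)))"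
    by simp
  have "t * exp (- (t\<^sup>2 * (?d\<^sup>2 + (r\<^sup>2)\<^sup>2/4 - 9/16))) \<le> t * (exp (t\<^sup>2 * (9/16 - ?d\<^sup>2)) * (exp 10000 * exp (- (r\<^sup>2/2))))"
    using 2 assms by (intro mult_left_mono) auto
  then show ?thesis using 1 by (simp add: mult.assoc)
qed

lemma integrable_gauss_maj: "integrable lborel (\<lambda>r::real. C * (exp (- (r\<^sup>2/2)) * (1 + r\<^sup>2)))"
proof -
  have "integrable lborel (\<lambda>x. (C * sqrt (2*pi)) * (std_normal_density x * \<bar>x\<bar>^0 + std_normal_density x * \<bar>x\<bar>^2))"
    by (intro integrable_mult_right Bochner_Integration.integrable_add integrable_std_normal_moment_abs)
  moreover have "(\<lambda>x::real. (C * sqrt (2*pi)) * (std_normal_density x * \<bar>x\<bar>^0 + std_normal_density x * \<bar>x\<bar>^2))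
     = (\<lambda>r. C * (exp (- (r\<^sup>2/2)) * (1 + r\<^sup>2)))"
    by (auto simp: fun_eq_iff std_normal_density_def normal_density_def field_simps)
  ultimately show ?thesis by metis
qed

lemma integrable_by_maj:
  fixes f :: "real \<Rightarrow> 'b::{banach, second_countable_topology}"
  assumes "f \<in> borel_measurable borel" "\<And>r. norm (f r) \<le> C * (exp (- (r\<^sup>2/2)) * (1 + r\<^sup>2))"
  shows "integrable lborel f"
proof (rule Bochner_Integration.integrable_bound[OF integrable_gauss_maj[of C]])
  show "f \<in> borel_measurable lborel" using assms by simp
  show "AE x in lborel. norm (f x) \<le> norm (C * (exp (- (x\<^sup>2/2)) * (1 + x\<^sup>2)))"
    using assms(2) by (auto intro: order_trans[OF _ abs_ge_self])
qed


definition Dg :: "real \<Rightarrow> real \<Rightarrow> real \<Rightarrow> real \<Rightarrow> complex" where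
  "Dg a b t u = complex_of_real (1/(2*pi)) *
     (LINT r|lborel. complex_of_real (h_t a b t r) * (\<i> * complex_of_real r) * exp (\<i> * complex_of_real (r*u)))"

lemma iexp_taylor1: "cmod (exp (\<i> * complex_of_real x) - 1 - \<i> * complex_of_real x) \<le> x\<^sup>2/2"
  using iexp_approx1[of x 1] by (simp add: power2_eq_square algebra_simps)

context
  fixes a b t :: real
  assumes ab: "0 \<le> a" "a \<le> b" "b \<le> 1" and tt: "t \<ge> 1/200"
begin

definition "Ch = t * exp (t\<^sup>2 * (9/16 - (max (1/4 - b) 0)\<^sup>2)) * exp 10000"

lemma Ch_nonneg: "Ch \<ge> 0" using tt unfolding Ch_def by simp

lemma hb: "\<bar>h_t a b t r\<bar> \<le> Ch * exp (- (r\<^sup>2/2))"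
  using h_bound[OF ab tt] unfolding Ch_def by simp

lemma hb2: "\<bar>h_t a b t r\<bar> \<le> Ch * (exp (- (r\<^sup>2/2)) * (1 + r\<^sup>2))"
proof -
  have "Ch * exp (- (r\<^sup>2/2)) \<le> Ch * (exp (- (r\<^sup>2/2)) * (1 + r\<^sup>2))"
    using Ch_nonneg by (intro mult_left_mono) auto
  then show ?thesis using hb[of r] by linarith
qed

lemma abs_le_sq: "\<bar>r::real\<bar> \<le> 1 + r\<^sup>2"
proof -
  have "0 \<le> (\<bar>r\<bar> - 1/2)\<^sup>2" by simp
  then show ?thesis by (simp add: power2_eq_square algebra_simps)
qed

lemma int1: "integrable lborel (\<lambda>r. complex_of_real (h_t a b t r) * exp (\<i> * complex_of_real (r*u)))"
proof (rule integrable_by_maj[where C = Ch])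
  show "(\<lambda>r. complex_of_real (h_t a b t r) * exp (\<i> * complex_of_real (r*u))) \<in> borel_measurable borel"
    by (intro borel_measurable_continuous_onI continuous_intros h_cont)
  fix r
  show "norm (complex_of_real (h_t a b t r) * exp (\<i> * complex_of_real (r*u))) \<le> Ch * (exp (- (r\<^sup>2/2)) * (1 + r\<^sup>2))"
    using hb2[of r] by (simp add: norm_mult)
qed

lemma int2: "integrable lborel (\<lambda>r. complex_of_real (h_t a b t r) * (\<i> * complex_of_real r) * exp (\<i> * complex_of_real (r*u)))"
proof (rule integrable_by_maj[where C = Ch])
  show "(\<lambda>r. complex_of_real (h_t a b t r) * (\<i> * complex_of_real r) * exp (\<i> * complex_of_real (r*u))) \<in> borel_measurable borel"
    by (intro borel_measurable_continuous_onI continuous_intros h_cont)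
  fix r
  have "\<bar>h_t a b t r\<bar> * \<bar>r\<bar> \<le> Ch * exp (- (r\<^sup>2/2)) * (1 + r\<^sup>2)"
    by (intro mult_mono hb abs_le_sq) (use Ch_nonneg in auto)
  then show "norm (complex_of_real (h_t a b t r) * (\<i> * complex_of_real r) * exp (\<i> * complex_of_real (r*u))) \<le> Ch * (exp (- (r\<^sup>2/2)) * (1 + r\<^sup>2))"
    by (simp add: norm_mult mult.assoc)
qed

lemma int3: "integrable lborel (\<lambda>r. \<bar>h_t a b t r\<bar> * r\<^sup>2)"
proof (rule integrable_by_maj[where C = Ch])
  show "(\<lambda>r. \<bar>h_t a b t r\<bar> * r\<^sup>2) \<in> borel_measurable borel"
    by (intro borel_measurable_continuous_onI continuous_intros h_cont)
  fix r
  have "\<bar>h_t a b t r\<bar> * r\<^sup>2 \<le> Ch * exp (- (r\<^sup>2/2)) * (1 + r\<^sup>2)"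
    by (intro mult_mono hb) (use Ch_nonneg in auto)
  then show "norm (\<bar>h_t a b t r\<bar> * r\<^sup>2) \<le> Ch * (exp (- (r\<^sup>2/2)) * (1 + r\<^sup>2))"
    by (simp add: mult.assoc)
qed


lemma g_est:
  "norm (g_t a b t (u+k) - g_t a b t u - k *\<^sub>R Dg a b t u)
     \<le> (1/(2*pi)) * (LINT r|lborel. \<bar>h_t a b t r\<bar> * r\<^sup>2) / 2 * k\<^sup>2"
proof -
  define F where "F = (\<lambda>r. complex_of_real (h_t a b t r))"
  define e where "e = (\<lambda>u r. exp (\<i> * complex_of_real (r*u)))"
  define X where "X = (\<lambda>r. F r * e u r * (exp (\<i> * complex_of_real (r*k)) - 1 - \<i> * complex_of_real (r*k)))"
  have i1: "integrable lborel (\<lambda>r. F r * e v r)" for v unfolding F_def e_def by (rule int1)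
  have i2: "integrable lborel (\<lambda>r. F r * (\<i> * complex_of_real r) * e u r)" unfolding F_def e_def by (rule int2)
  have i3: "integrable lborel (\<lambda>r. of_real k * (F r * (\<i> * complex_of_real r) * e u r))"
    using i2 by (rule integrable_mult_right)
  have Xeq: "X r = F r * e (u+k) r - F r * e u r - of_real k * (F r * (\<i> * complex_of_real r) * e u r)" for r
  proof -
    have "e (u+k) r = e u r * exp (\<i> * complex_of_real (r*k))"
      unfolding e_def by (simp add: distrib_left algebra_simps flip: exp_add)
    then show ?thesis unfolding X_def by (simp add: algebra_simps)
  qed
  have "(LINT r|lborel. X r) = (LINT r|lborel. F r * e (u+k) r - F r * e u r - of_real k * (F r * (\<i> * complex_of_real r) * e u r))"
    using Xeq by simp
  also have "\<dots> = (LINT r|lborel. F r * e (u+k) r) - (LINT r|lborel. F r * e u r) - of_real k * (LINT r|lborel. F r * (\<i> * complex_of_real r) * e u r)"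
    using i1 i2 i3 by (simp add: Bochner_Integration.integral_diff)
  finally have IX: "(LINT r|lborel. X r) = (LINT r|lborel. F r * e (u+k) r) - (LINT r|lborel. F r * e u r) - of_real k * (LINT r|lborel. F r * (\<i> * complex_of_real r) * e u r)" .
  have geq: "g_t a b t (u+k) - g_t a b t u - k *\<^sub>R Dg a b t u = complex_of_real (1/(2*pi)) * (LINT r|lborel. X r)"
    unfolding IX g_t_def Dg_def F_def e_def scaleR_conv_of_real by (simp add: algebra_simps)
  have Xb: "norm (X r) \<le> k\<^sup>2 / 2 * (\<bar>h_t a b t r\<bar> * r\<^sup>2)" for r
  proof -
    have "norm (X r) = \<bar>h_t a b t r\<bar> * cmod (exp (\<i> * complex_of_real (r*k)) - 1 - \<i> * complex_of_real (r*k))"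
      unfolding X_def F_def e_def by (simp add: norm_mult)
    also have "\<dots> \<le> \<bar>h_t a b t r\<bar> * ((r*k)\<^sup>2/2)"
      by (intro mult_left_mono iexp_taylor1) auto
    finally show ?thesis by (simp add: power_mult_distrib algebra_simps)
  qed
  have iG: "integrable lborel (\<lambda>r. k\<^sup>2 / 2 * (\<bar>h_t a b t r\<bar> * r\<^sup>2))"
    using int3 by (rule integrable_mult_right)
  have iX: "integrable lborel X"
  proof (rule Bochner_Integration.integrable_bound[OF iG])
    show "X \<in> borel_measurable lborel"
      unfolding X_def F_def e_def by (simp, intro borel_measurable_continuous_onI continuous_intros h_cont)
    show "AE x in lborel. norm (X x) \<le> norm (k\<^sup>2 / 2 * (\<bar>h_t a b t x\<bar> * x\<^sup>2))"
      using Xb by (auto intro: order_trans[OF _ abs_ge_self])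
  qed
  have "norm (LINT r|lborel. X r) \<le> (LINT r|lborel. k\<^sup>2 / 2 * (\<bar>h_t a b t r\<bar> * r\<^sup>2))"
    by (rule Bochner_Integration.integral_norm_bound_integral[OF iX iG]) (use Xb in auto)
  also have "\<dots> = k\<^sup>2 / 2 * (LINT r|lborel. \<bar>h_t a b t r\<bar> * r\<^sup>2)" by simp
  finally have "norm (LINT r|lborel. X r) \<le> k\<^sup>2 / 2 * (LINT r|lborel. \<bar>h_t a b t r\<bar> * r\<^sup>2)" .
  then have "1/(2*pi) * norm (LINT r|lborel. X r) \<le> 1/(2*pi) * (k\<^sup>2 / 2 * (LINT r|lborel. \<bar>h_t a b t r\<bar> * r\<^sup>2))"
    by (intro mult_left_mono) auto
  moreover have "norm (complex_of_real (1/(2*pi))) = 1/(2*pi)" by (simp only: norm_of_real) simp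
  ultimately show ?thesis unfolding geq norm_mult by (simp add: algebra_simps)
qed

lemma g_deriv: "(g_t a b t has_vector_derivative Dg a b t u) (at u)"
  unfolding has_vector_derivative_def has_derivative_at_alt
proof (intro conjI allI impI)
  show "bounded_linear (\<lambda>x. x *\<^sub>R Dg a b t u)" by (rule bounded_linear_scaleR_left)
  fix e :: real assume "e > 0"
  define M where "M = (1/(2*pi)) * (LINT r|lborel. \<bar>h_t a b t r\<bar> * r\<^sup>2) / 2"
  have M0: "M \<ge> 0" unfolding M_def by (auto intro!: integral_nonneg_AE)
  show "\<exists>d>0. \<forall>y. norm (y - u) < d \<longrightarrow> norm (g_t a b t y - g_t a b t u - (y - u) *\<^sub>R Dg a b t u) \<le> e * norm (y - u)"
  proof (intro exI[of _ "e/(M+1)"] conjI allI impI)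
    show "e/(M+1) > 0" using \<open>e > 0\<close> M0 by simp
    fix y assume y: "norm (y - u) < e/(M+1)"
    have "norm (g_t a b t y - g_t a b t u - (y - u) *\<^sub>R Dg a b t u) \<le> M * (y-u)\<^sup>2"
      using g_est[of u "y-u"] unfolding M_def by simp
    also have "\<dots> = (M * \<bar>y-u\<bar>) * \<bar>y-u\<bar>" by (simp add: power2_eq_square)
    also have "\<dots> \<le> e * \<bar>y-u\<bar>"
    proof (intro mult_right_mono)
      have "M * \<bar>y-u\<bar> \<le> (M+1) * \<bar>y-u\<bar>" by (intro mult_right_mono) auto
      also have "\<dots> \<le> (M+1) * (e/(M+1))" using y M0 by (intro mult_left_mono) auto
      also have "\<dots> = e" using M0 by simp
      finally show "M * \<bar>y-u\<bar> \<le> e" .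
    qed auto
    finally show "norm (g_t a b t y - g_t a b t u - (y - u) *\<^sub>R Dg a b t u) \<le> e * norm (y - u)" by simp
  qed
qed

lemma g_vd: "vector_derivative (g_t a b t) (at u) = Dg a b t u"
  by (rule vector_derivative_at[OF g_deriv])

end


definition Phi :: "real \<Rightarrow> real \<Rightarrow> real \<Rightarrow> real \<Rightarrow> complex \<Rightarrow> complex" where
  "Phi a b t u z = z * HH a b t z * exp (\<i> * z * complex_of_real u)"

lemma Phi_holo: "Phi a b t u holomorphic_on UNIV"
  unfolding Phi_def[abs_def] by (intro holomorphic_intros HH_holo[THEN holomorphic_on_subset]) auto

lemma lim_interval_integral:
  fixes f :: "real \<Rightarrow> complex"
  assumes f: "integrable lborel f"
  shows "(\<lambda>n. integral {- real n..real n} f) \<longlonglongrightarrow> integral\<^sup>L lborel f"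
proof -
  have "(\<lambda>n. integral\<^sup>L lborel (\<lambda>x. indicator {- real n..real n} x *\<^sub>R f x)) \<longlonglongrightarrow> integral\<^sup>L lborel f"
  proof (rule integral_dominated_convergence[where w = "\<lambda>x. norm (f x)"])
    show "f \<in> borel_measurable lborel" using f by auto
    show "(\<lambda>x. indicator {- real n..real n} x *\<^sub>R f x) \<in> borel_measurable lborel" for n
      using f by (intro borel_measurable_scaleR borel_measurable_indicator) auto
    show "integrable lborel (\<lambda>x. norm (f x))" using f by auto
    show "AE x in lborel. (\<lambda>n. indicator {- real n..real n} x *\<^sub>R f x) \<longlonglongrightarrow> f x"
    proof (intro AE_I2 tendsto_eventually)
      fix x :: real
      obtain N :: nat where "\<bar>x\<bar> \<le> real N" using real_arch_simple by blast
      then show "\<forall>\<^sub>F n in sequentially. indicator {- real n..real n} x *\<^sub>R f x = f x"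
        unfolding eventually_sequentially by (intro exI[of _ N]) (auto simp: indicator_def)
    qed
    show "AE x in lborel. norm (indicator {- real n..real n} x *\<^sub>R f x) \<le> norm (f x)" for n
      by (auto simp: indicator_def)
  qed
  moreover have "integral\<^sup>L lborel (\<lambda>x. indicator {- real n..real n} x *\<^sub>R f x) = integral {- real n..real n} f" for n
  proof -
    have "set_integrable lborel {- real n..real n} f"
      unfolding set_integrable_def using f by (intro integrable_mult_indicator) auto
    from set_borel_integral_eq_integral(2)[OF this] show ?thesis by (simp add: set_lebesgue_integral_def)
  qed
  ultimately show ?thesis by simp
qed

context
  fixes a b t :: real
  assumes ab: "0 \<le> a" "a \<le> b" "b \<le> 1" and tt: "t \<ge> 1/200"
begin

lemma Phi_norm0:
  assumes "u \<ge> 0" "s \<ge> 0"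
  shows "norm (Phi a b t u (Complex r s)) \<le>
    (\<bar>r\<bar> + s) * (t * exp (- (t\<^sup>2 * ((max (1/4 - b) 0)\<^sup>2 + (r\<^sup>2 - s\<^sup>2)\<^sup>2/4 - 20 * s^4 - s\<^sup>2/2 - 9/16)))) * exp (- (s*u))"
proof -
  have "norm (Complex r s) \<le> \<bar>r\<bar> + s" using cmod_le[of "Complex r s"] assms by simp
  moreover have "norm (HH a b t (Complex r s)) \<le> t * exp (- (t\<^sup>2 * ((max (1/4 - b) 0)\<^sup>2 + (r\<^sup>2 - s\<^sup>2)\<^sup>2/4 - 20 * s^4 - s\<^sup>2/2 - 9/16)))"
    using tt by (intro HH_norm_le ab) auto
  moreover have "norm (exp (\<i> * Complex r s * complex_of_real u)) = exp (- (s*u))"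
    by simp
  ultimately show ?thesis unfolding Phi_def norm_mult
    by (intro mult_mono) (use assms tt in auto)
qed

lemma Phi_norm1:
  assumes "u \<ge> 0" "0 \<le> s" "s \<le> y"
  shows "norm (Phi a b t u (Complex r s)) \<le>
    (\<bar>r\<bar> + y) * (t * exp (- (t\<^sup>2 * (max (1/4 - b) 0)\<^sup>2)) * exp (t\<^sup>2 * (81/4 * y^4 + y\<^sup>2/2 + 9/16)) * exp (- (1/8 * t\<^sup>2 * r^4))) * exp (- (s*u))"
proof -
  let ?d = "max (1/4 - b) 0"
  have "s\<^sup>2 \<le> y\<^sup>2" using assms by (intro power_mono) auto
  moreover have "s^4 \<le> y^4" using assms by (intro power_mono) auto
  moreover have "(r\<^sup>2 - s\<^sup>2)\<^sup>2/4 \<ge> r^4/8 - s^4/4"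
  proof -
    have "(r\<^sup>2 - s\<^sup>2)\<^sup>2/4 - (r^4/8 - s^4/4) = (r\<^sup>2 - 2 * s\<^sup>2) ^ 2 / 8"
      by (simp add: power2_eq_square power4_eq_xxxx field_simps)
    moreover have "(r\<^sup>2 - 2 * s\<^sup>2) ^ 2 / 8 \<ge> 0" by simp
    ultimately show ?thesis by linarith
  qed
  ultimately have "?d\<^sup>2 + (r\<^sup>2 - s\<^sup>2)\<^sup>2/4 - 20 * s^4 - s\<^sup>2/2 - 9/16 \<ge> ?d\<^sup>2 - (81/4 * y^4 + y\<^sup>2/2 + 9/16) + r^4/8"
    by linarith
  then have "t\<^sup>2 * (?d\<^sup>2 + (r\<^sup>2 - s\<^sup>2)\<^sup>2/4 - 20 * s^4 - s\<^sup>2/2 - 9/16) \<ge> t\<^sup>2 * (?d\<^sup>2 - (81/4 * y^4 + y\<^sup>2/2 + 9/16) + r^4/8)"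
    by (intro mult_left_mono) auto
  then have "exp (- (t\<^sup>2 * (?d\<^sup>2 + (r\<^sup>2 - s\<^sup>2)\<^sup>2/4 - 20 * s^4 - s\<^sup>2/2 - 9/16))) \<le>
      exp (- (t\<^sup>2 * ?d\<^sup>2) + t\<^sup>2 * (81/4 * y^4 + y\<^sup>2/2 + 9/16) + (- (1/8 * t\<^sup>2 * r^4)))"
    by (simp add: algebra_simps)
  also have "\<dots> = exp (- (t\<^sup>2 * ?d\<^sup>2)) * exp (t\<^sup>2 * (81/4 * y^4 + y\<^sup>2/2 + 9/16)) * exp (- (1/8 * t\<^sup>2 * r^4))"
    by (simp only: exp_add)
  finally have E: "exp (- (t\<^sup>2 * (?d\<^sup>2 + (r\<^sup>2 - s\<^sup>2)\<^sup>2/4 - 20 * s^4 - s\<^sup>2/2 - 9/16))) \<le>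
      exp (- (t\<^sup>2 * ?d\<^sup>2)) * exp (t\<^sup>2 * (81/4 * y^4 + y\<^sup>2/2 + 9/16)) * exp (- (1/8 * t\<^sup>2 * r^4))" .
  have "norm (Phi a b t u (Complex r s)) \<le>
    (\<bar>r\<bar> + s) * (t * exp (- (t\<^sup>2 * (?d\<^sup>2 + (r\<^sup>2 - s\<^sup>2)\<^sup>2/4 - 20 * s^4 - s\<^sup>2/2 - 9/16)))) * exp (- (s*u))"
    by (rule Phi_norm0) (use assms in auto)
  also have "\<dots> \<le> (\<bar>r\<bar> + y) * (t * (exp (- (t\<^sup>2 * ?d\<^sup>2)) * exp (t\<^sup>2 * (81/4 * y^4 + y\<^sup>2/2 + 9/16)) * exp (- (1/8 * t\<^sup>2 * r^4)))) * exp (- (s*u))"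
    using E assms tt by (intro mult_mono) auto
  finally show ?thesis by (simp add: mult.assoc)
qed


definition "GI = (LINT r|lborel. exp (- (r\<^sup>2/2)) * (1 + r\<^sup>2))"

lemma horiz_bound:
  assumes "u \<ge> 0" "y \<ge> 0"
  shows "norm (Phi a b t u (Complex r y)) \<le>
     ((1 + y) * (t * exp (- (t\<^sup>2 * (max (1/4 - b) 0)\<^sup>2)) * exp (t\<^sup>2 * (81/4 * y^4 + y\<^sup>2/2 + 9/16))) * exp 20000 * exp (- (y*u)))
     * (exp (- (r\<^sup>2/2)) * (1 + r\<^sup>2))"
proof -
  define Kc where "Kc = t * exp (- (t\<^sup>2 * (max (1/4 - b) 0)\<^sup>2)) * exp (t\<^sup>2 * (81/4 * y^4 + y\<^sup>2/2 + 9/16))"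
  have Kc0: "Kc \<ge> 0" unfolding Kc_def using tt by simp
  have "norm (Phi a b t u (Complex r y)) \<le> (\<bar>r\<bar> + y) * (Kc * exp (- (1/8 * t\<^sup>2 * r^4))) * exp (- (y*u))"
    using Phi_norm1[of u y y r] assms unfolding Kc_def by (simp add: mult.assoc)
  also have "\<dots> \<le> ((1 + y) * (1 + r\<^sup>2)) * (Kc * (exp (2500/(1/8)) * exp (- (r\<^sup>2/2)))) * exp (- (y*u))"
  proof (intro mult_mono mult_left_mono quart_bound)
    have "\<bar>r\<bar> \<le> 1 + r\<^sup>2" by (rule abs_le_sq[OF ab tt])
    moreover have "y \<le> y * (1 + r\<^sup>2)" using assms by (simp add: algebra_simps)
    ultimately show "\<bar>r\<bar> + y \<le> (1 + y) * (1 + r\<^sup>2)" by (simp add: algebra_simps)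
  qed (use tt Kc0 assms in auto)
  also have "\<dots> = ((1 + y) * Kc * exp 20000 * exp (- (y*u))) * (exp (- (r\<^sup>2/2)) * (1 + r\<^sup>2))"
    by simp
  finally show ?thesis unfolding Kc_def by (simp add: mult.assoc)
qed

lemma vert_bound:
  assumes "u \<ge> 0" "0 \<le> s" "s \<le> y" "\<bar>r\<bar> = N"
  shows "norm (Phi a b t u (Complex r s)) \<le>
     (N + y) * (t * exp (t\<^sup>2 * (81/4 * y^4 + y\<^sup>2/2 + 9/16)) * exp (- (1/8 * t\<^sup>2 * N^4)))"
proof -
  have "norm (Phi a b t u (Complex r s)) \<le>
    (\<bar>r\<bar> + y) * (t * exp (- (t\<^sup>2 * (max (1/4 - b) 0)\<^sup>2)) * exp (t\<^sup>2 * (81/4 * y^4 + y\<^sup>2/2 + 9/16)) * exp (- (1/8 * t\<^sup>2 * r^4))) * exp (- (s*u))"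
    by (rule Phi_norm1) (use assms in auto)
  also have "\<dots> \<le> (\<bar>r\<bar> + y) * (t * 1 * exp (t\<^sup>2 * (81/4 * y^4 + y\<^sup>2/2 + 9/16)) * exp (- (1/8 * t\<^sup>2 * r^4))) * 1"
    using assms tt by (intro mult_mono mult_left_mono mult_right_mono) (auto simp: zero_le_mult_iff)
  also have "r^4 = N^4" using assms power_even_abs[of 4 r] by simp
  finally show ?thesis using assms by simp
qed

lemma Dg_contour:
  assumes u: "u > 0" and y: "y > 0"
  shows "norm (Dg a b t u) \<le> (1/(2*pi)) * ((((1 + y) * (t * exp (- (t\<^sup>2 * (max (1/4 - b) 0)\<^sup>2)) * exp (t\<^sup>2 * (81/4 * y^4 + y\<^sup>2/2 + 9/16))) * exp 20000 * exp (- (y*u)))) * GI)"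
proof -
  define \<Phi> where "\<Phi> = Phi a b t u"
  define W where "W = (((1 + y) * (t * exp (- (t\<^sup>2 * (max (1/4 - b) 0)\<^sup>2)) * exp (t\<^sup>2 * (81/4 * y^4 + y\<^sup>2/2 + 9/16))) * exp 20000 * exp (- (y*u))))"
  define B where "B = (\<lambda>N::real. (N + y) * (t * exp (t\<^sup>2 * (81/4 * y^4 + y\<^sup>2/2 + 9/16)) * exp (- (1/8 * t\<^sup>2 * N^4))))"
  define \<psi> where "\<psi> = (\<lambda>r::real. \<Phi> (of_real r))"
  obtain P where P: "\<And>x. x \<in> UNIV \<Longrightarrow> (P has_field_derivative \<Phi> x) (at x within UNIV)"
    using holomorphic_convex_primitive'[OF convex_UNIV open_UNIV Phi_holo[of a b t u]] unfolding \<Phi>_def by blast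
  have seg: "(\<Phi> has_contour_integral (P w - P z)) (linepath z w)" for z w
    using contour_integral_primitive[OF P valid_path_linepath[of z w]] by simp
  have G_int: "integrable lborel (\<lambda>r. W * (exp (- (r\<^sup>2/2)) * (1 + r\<^sup>2)))" by (rule integrable_gauss_maj)
  have G_UNIV: "integral UNIV (\<lambda>r. W * (exp (- (r\<^sup>2/2)) * (1 + r\<^sup>2))) = W * GI"
    using integral_lborel[OF G_int] unfolding GI_def by simp
  have G_intUNIV: "(\<lambda>r. W * (exp (- (r\<^sup>2/2)) * (1 + r\<^sup>2))) integrable_on UNIV"
    using has_integral_integral_lborel[OF G_int] by blast
  have W0: "W \<ge> 0" unfolding W_def using tt y by simp
  have B0: "B N \<ge> 0" if "N \<ge> 0" for N unfolding B_def using tt y that by simp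
  have IN: "norm (integral {-N..N} \<psi>) \<le> W * GI + 2 * y * B N" if N: "N > 0" for N
  proof -
    have re1: "(\<psi> has_integral (P (of_real N) - P (of_real (-N)))) {-N..N}"
      using has_contour_integral_linepath_Reals_iff[of "of_real (-N)" "of_real N" \<Phi>] seg[where z="of_real (-N)" and w="of_real N"] N
      unfolding \<psi>_def by simp
    define J where "J = P (of_real N + \<i> * of_real y) - P (of_real (-N) + \<i> * of_real y)"
    have "(\<Phi> has_contour_integral J) ((+) (\<i> * of_real y) \<circ> linepath (of_real (-N)) (of_real N))"
      unfolding linepath_translate J_def using seg by (simp add: add.commute)
    then have "((\<lambda>x. \<Phi> (x + \<i> * of_real y)) has_contour_integral J) (linepath (of_real (-N)) (of_real N))"
      by (simp add: has_contour_integral_translate)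
    then have re2: "((\<lambda>x. \<Phi> (of_real x + \<i> * of_real y)) has_integral J) {-N..N}"
      using has_contour_integral_linepath_Reals_iff[of "of_real (-N)" "of_real N" "\<lambda>x. \<Phi> (x + \<i> * of_real y)"] N
      by simp
    have "norm J \<le> integral {-N..N} (\<lambda>r. W * (exp (- (r\<^sup>2/2)) * (1 + r\<^sup>2)))"
    proof -
      have "norm (integral {-N..N} (\<lambda>x. \<Phi> (of_real x + \<i> * of_real y))) \<le> integral {-N..N} (\<lambda>r. W * (exp (- (r\<^sup>2/2)) * (1 + r\<^sup>2)))"
      proof (rule integral_norm_bound_integral)
        show "(\<lambda>x. \<Phi> (of_real x + \<i> * of_real y)) integrable_on {-N..N}" using re2 by blast
        show "(\<lambda>r. W * (exp (- (r\<^sup>2/2)) * (1 + r\<^sup>2))) integrable_on {-N..N}"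
          by (intro integrable_continuous_interval continuous_intros) auto
        fix x assume "x \<in> {-N..N}"
        have "of_real x + \<i> * of_real y = Complex x y" by (simp add: complex_eq_iff)
        then show "norm (\<Phi> (of_real x + \<i> * of_real y)) \<le> W * (exp (- (x\<^sup>2/2)) * (1 + x\<^sup>2))"
          unfolding \<Phi>_def W_def using horiz_bound[of u y x] u y by simp
      qed
      then show ?thesis using re2 by (simp add: integral_unique)
    qed
    also have "\<dots> \<le> integral UNIV (\<lambda>r. W * (exp (- (r\<^sup>2/2)) * (1 + r\<^sup>2)))"
      by (intro integral_subset_le G_intUNIV integrable_continuous_interval continuous_intros ballI)
         (use W0 in auto)
    finally have "norm J \<le> integral UNIV (\<lambda>r. W * (exp (- (r\<^sup>2/2)) * (1 + r\<^sup>2)))" .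
    then have nJ: "norm J \<le> W * GI" unfolding G_UNIV .
    have vert: "norm (P (of_real r + \<i> * of_real y) - P (of_real r)) \<le> B N * y" if "\<bar>r\<bar> = N" for r
    proof -
      have "norm (P (of_real r + \<i> * of_real y) - P (of_real r)) \<le> B N * norm (of_real r + \<i> * of_real y - of_real r)"
      proof (rule has_contour_integral_bound_linepath[OF seg])
        show "0 \<le> B N" using B0 N by simp
        fix x assume "x \<in> closed_segment (complex_of_real r) (complex_of_real r + \<i> * complex_of_real y)"
        then obtain v where v: "0 \<le> v" "v \<le> 1" "x = (1 - v) *\<^sub>R complex_of_real r + v *\<^sub>R (complex_of_real r + \<i> * complex_of_real y)"
          unfolding closed_segment_def by blast
        then have "x = Complex r (v * y)" by (simp add: complex_eq_iff scaleR_conv_of_real algebra_simps)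
        moreover have "v * y \<le> y" using v y by (simp add: mult_le_cancel_right1)
        ultimately show "norm (\<Phi> x) \<le> B N"
          unfolding \<Phi>_def B_def using vert_bound[of u "v * y" y r N] u v y that by simp
      qed
      then show ?thesis using y by (simp add: norm_mult)
    qed
    have "integral {-N..N} \<psi> = J - (P (of_real N + \<i> * of_real y) - P (of_real N)) + (P (of_real (-N) + \<i> * of_real y) - P (of_real (-N)))"
      using re1 unfolding J_def by (simp add: integral_unique)
    moreover have "norm (J - A + B2) \<le> norm J + norm A + norm B2" for A B2 :: complex
    proof -
      have "norm (J - A + B2) \<le> norm (J - A) + norm B2" by (rule norm_triangle_ineq)
      moreover have "norm (J - A) \<le> norm J + norm A" by (rule norm_triangle_ineq4)
      ultimately show ?thesis by linarith
    qed
    ultimately have "norm (integral {-N..N} \<psi>) \<le> norm J + norm (P (of_real N + \<i> * of_real y) - P (of_real N)) + norm (P (of_real (-N) + \<i> * of_real y) - P (of_real (-N)))"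
      by presburger
    also have "\<dots> \<le> W * GI + B N * y + B N * y"
      using nJ vert[of N] vert[of "-N"] N by (intro add_mono) auto
    finally show ?thesis by simp
  qed
  have \<psi>_int: "integrable lborel \<psi>"
  proof -
    have "integrable lborel (\<lambda>r. (- \<i>) * (complex_of_real (h_t a b t r) * (\<i> * complex_of_real r) * exp (\<i> * complex_of_real (r*u))))"
      by (intro integrable_mult_right int2[OF ab tt])
    moreover have "(\<lambda>r. (- \<i>) * (complex_of_real (h_t a b t r) * (\<i> * complex_of_real r) * exp (\<i> * complex_of_real (r*u)))) = \<psi>"
      unfolding \<psi>_def \<Phi>_def Phi_def by (auto simp: fun_eq_iff HH_real algebra_simps)
    ultimately show ?thesis by metis
  qed
  have Dg_eq: "Dg a b t u = complex_of_real (1/(2*pi)) * (\<i> * integral\<^sup>L lborel \<psi>)"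
  proof -
    have "(\<lambda>r. complex_of_real (h_t a b t r) * (\<i> * complex_of_real r) * exp (\<i> * complex_of_real (r*u))) = (\<lambda>r. \<i> * \<psi> r)"
      unfolding \<psi>_def \<Phi>_def Phi_def by (auto simp: fun_eq_iff HH_real algebra_simps)
    then show ?thesis unfolding Dg_def by simp
  qed
  have L1: "(\<lambda>n. norm (integral {- real (Suc n)..real (Suc n)} \<psi>)) \<longlonglongrightarrow> norm (integral\<^sup>L lborel \<psi>)"
    using tendsto_norm[OF LIMSEQ_Suc[OF lim_interval_integral[OF \<psi>_int]]] by simp
  have L2: "(\<lambda>n. W * GI + 2 * y * B (real (Suc n))) \<longlonglongrightarrow> W * GI + 2 * y * 0"
  proof (intro tendsto_intros)
    have t0: "t > 0" using tt by simp
    have "(\<lambda>n::nat. (real (Suc n) + y) * exp (- (1/8 * t\<^sup>2 * real (Suc n)^4))) \<longlonglongrightarrow> 0"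
      using t0 by real_asymp
    then have "(\<lambda>n::nat. (t * exp (t\<^sup>2 * (81/4 * y^4 + y\<^sup>2/2 + 9/16))) * ((real (Suc n) + y) * exp (- (1/8 * t\<^sup>2 * real (Suc n)^4)))) \<longlonglongrightarrow> 0"
      by (rule tendsto_mult_right_zero)
    then show "(\<lambda>n. B (real (Suc n))) \<longlonglongrightarrow> 0" unfolding B_def by (simp add: algebra_simps)
  qed
  have "norm (integral\<^sup>L lborel \<psi>) \<le> W * GI + 2 * y * 0"
    by (rule LIMSEQ_le[OF L1 L2]) (use IN in \<open>auto simp del: of_nat_Suc\<close>)
  then have "norm (integral\<^sup>L lborel \<psi>) \<le> W * GI" by simp
  moreover have "norm (Dg a b t u) = 1/(2*pi) * norm (integral\<^sup>L lborel \<psi>)"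
    unfolding Dg_eq norm_mult by (simp only: norm_of_real) simp
  ultimately show ?thesis unfolding W_def by (simp add: divide_simps)
qed

end


lemma exp_one_ge: "exp (1::real) \<ge> 5/2"
  using exp_lower_Taylor_quadratic[of 1] by simp

lemma sqrt_exp: "sqrt (exp (x::real)) = exp (x/2)"
proof -
  have "exp (x/2) ^ 2 = exp x" by (simp add: power2_eq_square flip: exp_add)
  then show ?thesis by (metis real_sqrt_abs abs_exp_cancel)
qed

lemma lin1: "(x1::real) \<le> x2 \<Longrightarrow> x3 \<le> x4 \<Longrightarrow> x5 = (x2 + x4)/2 \<Longrightarrow> (x1 + x3)/2 \<le> x5"
  by (simp add: field_simps)

lemma lin2: "(m::real) \<le> 1 \<Longrightarrow> 0 \<le> mU \<Longrightarrow> x5 = (eU + mU - er - m)/2 \<Longrightarrow> er \<le> (2/5) * eU \<Longrightarrow> (eU - (2/5) * eU - 1)/2 \<le> x5"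
  by (simp add: field_simps)

lemma g1: "((a::real)*b + c*d)/2 - (a + c)/2 = (a*(b-1) + c*(d-1))/2"
  by (simp add: field_simps)

lemma k1a: "cosh (rho + v) - cosh rho = (exp rho * (exp v - 1) + exp (-rho) * (exp (-v) - 1)) / (2::real)"
proof -
  have e: "exp (- (rho + v)) = exp (- rho) * exp (- v)" by (simp flip: exp_add)
  show ?thesis unfolding cosh_field_def e exp_add by (rule g1)
qed

lemma g2: "(0::real) < A \<Longrightarrow> A * A * c \<ge> 1 \<Longrightarrow> A * c \<ge> 1 / A"
  by (simp add: pos_divide_le_eq ac_simps)

lemma k1b: "exp rho * exp rho * (c::real) \<ge> 1 \<Longrightarrow> exp rho * c \<ge> exp (-rho)"
  using g2[of "exp rho" c] by (simp add: exp_minus inverse_eq_divide)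

lemma g4: "(0::real) \<le> v \<Longrightarrow> A * (1 - 2*k) \<ge> B \<Longrightarrow> (A * v + B * (-v))/2 \<ge> v * k * A"
proof -
  assume v: "0 \<le> v" and h: "A * (1 - 2*k) \<ge> B"
  have "v * B \<le> v * (A * (1 - 2*k))" using h v by (rule mult_left_mono)
  then show ?thesis by (simp add: field_simps)
qed

lemma K1:
  fixes r rho v :: real
  assumes "0 < r" "r < 3" "r \<le> rho" "0 \<le> v"
  shows "cosh (rho + v) - cosh rho \<ge> v * (r/7) * exp rho"
proof -
  have "exp v - 1 \<ge> v" using exp_ge_add_one_self[of v] by linarith
  moreover have "exp (-v) - 1 \<ge> -v" using exp_ge_add_one_self[of "-v"] by linarith
  ultimately have 1: "cosh (rho + v) - cosh rho \<ge> (exp rho * v + exp (-rho) * (-v)) / 2"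
  proof -
    assume h1: "exp v - 1 \<ge> v" and h2: "exp (-v) - 1 \<ge> -v"
    have "exp rho * (exp v - 1) \<ge> exp rho * v" using h1 by (intro mult_left_mono) auto
    moreover have "exp (-rho) * (exp (-v) - 1) \<ge> exp (-rho) * (-v)" using h2 by (intro mult_left_mono) auto
    ultimately show ?thesis using k1a[of rho v] by (rule lin1)
  qed
  have "exp (2*rho) \<ge> 1 + 2*r" using exp_ge_add_one_self[of "2*rho"] assms by linarith
  moreover have "(1 + 2*r) * (1 - 2*(r/7)) \<ge> 1"
  proof -
    have eq: "(1 + 2*r) * (1 - 2*(r/7)) = 1 + 4*r*(3 - r)/7" by (simp add: field_simps)
    moreover have "4*r*(3 - r)/7 \<ge> 0" using assms by simp
    ultimately show ?thesis by (metis le_add_same_cancel1)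
  qed
  moreover have "1 - 2*(r/7) \<ge> 0" using assms by simp
  ultimately have "exp (2*rho) * (1 - 2*(r/7)) \<ge> 1"
  proof -
    assume A: "exp (2*rho) \<ge> 1 + 2*r" and B: "(1 + 2*r) * (1 - 2*(r/7)) \<ge> 1" and C: "1 - 2*(r/7) \<ge> 0"
    have "(1 + 2*r) * (1 - 2*(r/7)) \<le> exp (2*rho) * (1 - 2*(r/7))" using A C by (rule mult_right_mono)
    with B show ?thesis by (rule order_trans)
  qed
  moreover have e2: "exp (2*rho) = exp rho * exp rho" by (simp only: mult_2 exp_add)
  ultimately have "exp rho * exp rho * (1 - 2*(r/7)) \<ge> 1" by (simp only: e2)
  then have "exp rho * (1 - 2*(r/7)) \<ge> exp (-rho)" by (rule k1b)
  then have "(exp rho * v + exp (-rho) * (-v)) / 2 \<ge> v * (r/7) * exp rho"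
    using assms(4) by (intro g4)
  from order_trans[OF this 1] show ?thesis .
qed

lemma K2:
  fixes r rho v :: real
  assumes "0 \<le> rho" "1 \<le> v"
  shows "cosh (rho + v) - cosh rho \<ge> exp (rho + v) / 16"
proof -
  define U where "U = rho + v"
  have "exp U \<ge> exp 1" unfolding U_def using assms by simp
  then have eU: "exp U \<ge> 5/2" using exp_one_ge by (rule order_trans[rotated])
  have "exp rho = exp U * exp (-v)" unfolding U_def by (simp flip: exp_add)
  also have "\<dots> \<le> exp U * exp (-1)" using assms by (intro mult_left_mono) auto
  also have "exp (-1::real) \<le> 2/5" using exp_one_ge by (simp add: exp_minus field_simps)
  then have "exp U * exp (-1) \<le> exp U * (2/5)" by (intro mult_left_mono) auto
  finally have er0: "exp rho \<le> exp U * (2/5)" .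
  have er: "exp rho \<le> (2/5) * exp U" using er0 by (simp only: mult.commute)
  have "exp (-rho) \<le> 1" using assms by simp
  moreover have "exp (-U) \<ge> 0" by simp
  moreover have "cosh U - cosh rho = (exp U + exp (-U) - exp rho - exp (-rho)) / 2"
    by (simp add: cosh_field_def field_simps)
  ultimately have "cosh U - cosh rho \<ge> (exp U - (2/5) * exp U - 1) / 2" using er by (rule lin2)
  moreover have "(exp U - (2/5) * exp U - 1) / 2 \<ge> exp U / 16" using eU by simp
  ultimately show ?thesis unfolding U_def by (rule order_trans[rotated])
qed

lemma W1:
  fixes r rho u :: real
  assumes "0 < r" "r < 3" "r \<le> rho" "rho < u"
  shows "1 / sqrt (cosh u - cosh rho) \<le> sqrt (7/r) * exp (- rho/2) * (1 / sqrt (u - rho))"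
proof -
  have pos: "(u - rho) * (r/7) * exp rho > 0" using assms by simp
  have "cosh u - cosh rho \<ge> (u - rho) * (r/7) * exp rho" using K1[of r rho "u - rho"] assms by simp
  then have "1 / sqrt (cosh u - cosh rho) \<le> 1 / sqrt ((u - rho) * (r/7) * exp rho)"
    using pos by (intro divide_left_mono real_sqrt_le_mono mult_pos_pos) auto
  also have "\<dots> = sqrt (7/r) * exp (- rho/2) * (1 / sqrt (u - rho))"
  proof -
    have "sqrt ((u - rho) * (r/7) * exp rho) = sqrt (u - rho) * sqrt (r/7) * exp (rho/2)"
      by (simp only: real_sqrt_mult sqrt_exp)
    moreover have "sqrt (7/r) = 1 / sqrt (r/7)" by (simp add: real_sqrt_divide)
    moreover have "exp (- rho/2) = 1 / exp (rho/2)" by (simp add: exp_minus inverse_eq_divide)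
    ultimately show ?thesis by simp
  qed
  finally show ?thesis .
qed

lemma W2:
  fixes rho u :: real
  assumes "0 \<le> rho" "rho + 1 \<le> u"
  shows "1 / sqrt (cosh u - cosh rho) \<le> 4 * exp (- (1/2) * u)"
proof -
  have c: "cosh u - cosh rho \<ge> exp u / 16" using K2[of rho "u - rho"] assms by simp
  then have "cosh u - cosh rho > 0" using exp_gt_zero[of u] by (intro less_le_trans[OF _ c]) simp
  with c have "1 / sqrt (cosh u - cosh rho) \<le> 1 / sqrt (exp u / 16)"
    by (intro divide_left_mono real_sqrt_le_mono mult_pos_pos) auto
  also have "\<dots> = 4 * exp (- (1/2) * u)"
    by (simp add: real_sqrt_divide sqrt_exp exp_minus field_simps)
  finally show ?thesis .
qed

lemma I1: "((\<lambda>u. 1 / sqrt (u - rho)) has_integral 2) {rho..rho+1}"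
proof -
  have "((\<lambda>u. 1 / sqrt (u - rho)) has_integral (2 * sqrt ((rho + 1) - rho) - 2 * sqrt (rho - rho))) {rho..rho+1}"
  proof (rule fundamental_theorem_of_calculus_interior)
    show "continuous_on {rho..rho + 1} (\<lambda>u. 2 * sqrt (u - rho))" by (intro continuous_intros)
    fix x assume "x \<in> {rho<..<rho + 1}"
    then have "x - rho > 0" by simp
    then show "((\<lambda>u. 2 * sqrt (u - rho)) has_vector_derivative 1 / sqrt (x - rho)) (at x)"
      unfolding has_real_derivative_iff_has_vector_derivative[symmetric]
      by (auto intro!: derivative_eq_intros simp: field_simps)
  qed simp
  then show ?thesis by simp
qed

lemma I2: "((\<lambda>u::real. exp (- (1/2) * u)) has_integral exp (- (1/2) * c) / (1/2)) {c..}"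
  by (rule has_integral_exp_minus_to_infinity) simp


lemma kernel_bound:
  fixes f :: "real \<Rightarrow> complex" and r rho M :: real
  assumes r: "0 < r" "r < 3" "r \<le> rho" and M: "0 \<le> M" and fb: "\<And>u. rho < u \<Longrightarrow> norm (f u) \<le> M"
  shows "norm (LINT u:{rho<..}|lborel. f u / complex_of_real (sqrt (cosh u - cosh rho)))
    \<le> M * (sqrt (7/r) * exp (- rho/2) * 2 + 4 * (exp (- (1/2) * (rho+1)) / (1/2)))"
proof -
  define F where "F u = indicator {rho<..} u *\<^sub>R (f u / complex_of_real (sqrt (cosh u - cosh rho)))" for u
  define A where "A = sqrt (7/r) * exp (- rho/2)"
  define w1 where "w1 u = A * (1 / sqrt (u - rho))" for u
  define w2 where "w2 u = 4 * exp (- (1/2) * u)" for u :: real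
  define S1 where "S1 = {rho..rho+1}"
  define S2 where "S2 = {rho+1..}"
  have A0: "A \<ge> 0" unfolding A_def using r by simp
  have w10: "w1 u \<ge> 0" if "u \<in> S1" for u unfolding w1_def using A0 that S1_def by simp
  have w20: "w2 u \<ge> 0" for u unfolding w2_def by simp
  have bound0: "0 \<le> M * (A * 2 + 4 * (exp (- (1/2) * (rho+1)) / (1/2)))" using M A0 by simp
  have ieq: "(LINT u:{rho<..}|lborel. f u / complex_of_real (sqrt (cosh u - cosh rho))) = integral\<^sup>L lborel F"
    by (simp add: set_lebesgue_integral_def F_def[abs_def])
  have pw: "ennreal (norm (F u)) \<le> ennreal M * (ennreal (w1 u) * indicator S1 u + ennreal (w2 u) * indicator S2 u)" for u
  proof (cases "rho < u")
    case False
    then show ?thesis by (simp add: F_def)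
  next
    case True
    have cpos: "cosh u - cosh rho > 0"
    proof -
      have "cosh rho < cosh u" using True r by (subst cosh_real_nonneg_less_iff) auto
      then show ?thesis by simp
    qed
    have "norm (F u) = norm (f u) * (1 / sqrt (cosh u - cosh rho))"
      using True cpos by (simp add: F_def norm_divide)
    also have "\<dots> \<le> M * (1 / sqrt (cosh u - cosh rho))"
      using fb[OF True] cpos by (intro mult_right_mono) auto
    finally have nF: "norm (F u) \<le> M * (1 / sqrt (cosh u - cosh rho))" .
    show ?thesis
    proof (cases "u \<le> rho + 1")
      case True2: True
      have "1 / sqrt (cosh u - cosh rho) \<le> w1 u" unfolding w1_def A_def using W1[of r rho u] r True by simp
      then have "norm (F u) \<le> M * w1 u" using nF M by (meson mult_left_mono order_trans)
      have "u \<in> S1" using True True2 unfolding S1_def by simp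
      then have "ennreal (norm (F u)) \<le> ennreal M * ennreal (w1 u)" using \<open>norm (F u) \<le> M * w1 u\<close> M w10 by (simp add: ennreal_mult[symmetric])
      also have "\<dots> \<le> ennreal M * (ennreal (w1 u) * indicator S1 u + ennreal (w2 u) * indicator S2 u)"
        using True True2 unfolding S1_def by (intro mult_left_mono) (auto simp: indicator_def)
      finally show ?thesis .
    next
      case False2: False
      have "1 / sqrt (cosh u - cosh rho) \<le> w2 u" unfolding w2_def using W2[of rho u] r False2 by simp
      then have "norm (F u) \<le> M * w2 u" using nF M by (meson mult_left_mono order_trans)
      then have "ennreal (norm (F u)) \<le> ennreal M * ennreal (w2 u)" using M w20 by (simp add: ennreal_mult[symmetric])
      also have "\<dots> \<le> ennreal M * (ennreal (w1 u) * indicator S1 u + ennreal (w2 u) * indicator S2 u)"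
        using False2 unfolding S2_def by (intro mult_left_mono) (auto simp: indicator_def)
      finally show ?thesis .
    qed
  qed
  have m1: "(\<lambda>u. ennreal (w1 u) * indicator S1 u) \<in> borel_measurable lborel"
    unfolding w1_def S1_def by measurable
  have m2: "(\<lambda>u. ennreal (w2 u) * indicator S2 u) \<in> borel_measurable lborel"
    unfolding w2_def S2_def by measurable
  have n1: "(\<integral>\<^sup>+u. ennreal (w1 u) * indicator S1 u \<partial>lborel) = ennreal (A * 2)"
  proof -
    have "(w1 has_integral A * 2) S1" unfolding w1_def S1_def by (intro has_integral_mult_right I1)
    then show ?thesis using nn_integral_has_integral_lebesgue'[of S1 w1 "A * 2"] w10 by blast
  qed
  have n2: "(\<integral>\<^sup>+u. ennreal (w2 u) * indicator S2 u \<partial>lborel) = ennreal (4 * (exp (- (1/2) * (rho+1)) / (1/2)))"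
  proof -
    have "(w2 has_integral 4 * (exp (- (1/2) * (rho+1)) / (1/2))) S2" unfolding w2_def S2_def by (intro has_integral_mult_right I2)
    then show ?thesis using nn_integral_has_integral_lebesgue'[of S2 w2] w20 by blast
  qed
  show ?thesis
  proof (cases "integrable lborel F")
    case False
    then show ?thesis unfolding ieq using bound0 A_def by (simp add: not_integrable_integral_eq)
  next
    case True
    have "ennreal (norm (integral\<^sup>L lborel F)) \<le> (\<integral>\<^sup>+u. norm (F u) \<partial>lborel)"
      by (rule integral_norm_bound_ennreal[OF True])
    also have "\<dots> \<le> (\<integral>\<^sup>+u. ennreal M * (ennreal (w1 u) * indicator S1 u + ennreal (w2 u) * indicator S2 u) \<partial>lborel)"
      by (intro nn_integral_mono pw)
    also have "\<dots> = ennreal M * ((\<integral>\<^sup>+u. ennreal (w1 u) * indicator S1 u \<partial>lborel) + (\<integral>\<^sup>+u. ennreal (w2 u) * indicator S2 u \<partial>lborel))"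
      using m1 m2 by (simp add: nn_integral_cmult nn_integral_add)
    also have "\<dots> = ennreal (M * (A * 2 + 4 * (exp (- (1/2) * (rho+1)) / (1/2))))"
      unfolding n1 n2 using M A0 by (simp add: ennreal_mult ennreal_plus[symmetric])
    finally have "norm (integral\<^sup>L lborel F) \<le> M * (A * 2 + 4 * (exp (- (1/2) * (rho+1)) / (1/2)))"
      using bound0 by (simp add: ennreal_le_iff)
    then show ?thesis unfolding ieq A_def .
  qed
qed


lemma E1:
  fixes Y :: real assumes "0 < Y" "Y^3 \<le> 6"
  shows "9/16 - Y^3/2 \<le> 1 - Y^4/8"
proof -
  have "Y < 4"
  proof (rule ccontr)
    assume "\<not> Y < 4"
    then have "4^3 \<le> Y^3" by (intro power_mono) auto
    then show False using assms by simp
  qed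
  then have Y4: "Y^4 \<le> 4 * Y^3"
    using assms by (simp add: power4_eq_xxxx power3_eq_cube mult_right_mono)
  then show ?thesis by (simp add: field_simps)
qed

lemma E2:
  fixes Y :: real assumes "0 < Y" "6 \<le> Y^3" "Y^3 \<le> 30"
  shows "9/16 - Y^3/2 \<le> - (Y^4/8)"
proof -
  have "Y \<le> 311/100"
  proof (rule ccontr)
    assume "\<not> Y \<le> 311/100"
    then have "(311/100)^3 < Y^3" by (intro power_strict_mono) auto
    moreover have "(311/100::real)^3 = 30080231/1000000" by (simp add: power3_eq_cube)
    ultimately show False using assms by simp
  qed
  then have Y4: "Y^4 \<le> (311/100) * Y^3"
    using assms by (simp add: power4_eq_xxxx power3_eq_cube mult_right_mono)
  then show ?thesis using assms by (simp add: field_simps)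
qed

lemma E3:
  fixes Y :: real assumes "0 < Y" "30 \<le> Y^3"
  shows "81/4 * (Y/4)^4 + (Y/4)\<^sup>2/2 + 9/16 - (Y/4) * Y^3 \<le> - (Y^4/8) - Y^4/32"
proof -
  have Y: "Y \<ge> 31/10"
  proof (rule ccontr)
    assume "\<not> Y \<ge> 31/10"
    then have "Y^3 < (31/10)^3" using assms by (intro power_strict_mono) auto
    moreover have "(31/10::real)^3 = 29791/1000" by (simp add: power3_eq_cube)
    ultimately show False using assms by simp
  qed
  have "(31/10)\<^sup>2 \<le> Y\<^sup>2" by (rule power_mono[OF Y]) simp
  then have Y2: "Y\<^sup>2 \<ge> 961/100" by (simp add: power2_eq_square)
  have Y42: "Y^4 = Y\<^sup>2 * Y\<^sup>2" by (simp add: power4_eq_xxxx power2_eq_square)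
  have Y4: "Y^4 \<ge> (961/100) * Y\<^sup>2" unfolding Y42 using Y2 by (intro mult_right_mono) auto
  have e1: "(Y/4)^4 = Y^4/256" by (simp add: power_divide)
  have e2: "(Y/4)\<^sup>2 = Y\<^sup>2/16" by (simp add: power_divide)
  have e3: "(Y/4) * Y^3 = Y^4/4" by (simp add: power4_eq_xxxx power3_eq_cube)
  show ?thesis unfolding e1 e2 e3 using Y2 Y4 by (simp add: field_simps)
qed

lemma E4:
  fixes Y t :: real assumes "1 \<le> Y" "t \<ge> 1/200"
  shows "(1 + Y/4) * exp (- (t\<^sup>2 * Y^4 / 32)) \<le> 1280001"
proof -
  define x where "x = Y^4 / 1280000"
  have x0: "x \<ge> 0" unfolding x_def by simp
  have "t\<^sup>2 \<ge> (1/200)\<^sup>2" using assms by (intro power_mono) auto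
  then have "t\<^sup>2 * Y^4 / 32 \<ge> (1/200)\<^sup>2 * Y^4 / 32" by (intro divide_right_mono mult_right_mono) auto
  then have "t\<^sup>2 * Y^4 / 32 \<ge> x" unfolding x_def by (simp add: power2_eq_square)
  then have ex: "exp (- (t\<^sup>2 * Y^4 / 32)) \<le> exp (- x)" by simp
  have "Y \<le> Y^4" using assms by (simp add: power_increasing[of 1 4 Y, simplified])
  moreover have "Y/4 \<le> Y" using assms by simp
  ultimately have "Y/4 \<le> Y^4" by (rule order_trans[rotated])
  then have "1 + Y/4 \<le> 1 + 1280000 * x" unfolding x_def by simp
  then have "(1 + Y/4) * exp (- (t\<^sup>2 * Y^4 / 32)) \<le> (1 + 1280000 * x) * exp (- x)"
    using ex assms by (intro mult_mono) auto
  also have "\<dots> = exp (- x) + 1280000 * (x * exp (- x))" by (simp add: algebra_simps)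
  also have "\<dots> \<le> 1 + 1280000 * 1"
  proof (intro add_mono mult_left_mono)
    show "exp (- x) \<le> 1" using x0 by simp
    have "x \<le> exp x" using exp_ge_add_one_self[of x] by linarith
    then show "x * exp (- x) \<le> 1" by (simp add: exp_minus field_simps)
  qed auto
  finally show ?thesis by simp
qed

lemma Ypowr:
  fixes x t :: real assumes "0 < x" "0 < t"
  defines "Y \<equiv> x powr (1/3) / t powr (2/3)"
  shows "Y > 0" "Y^3 = x / t\<^sup>2" "t\<^sup>2 * Y^4 = x powr (4/3) / t powr (2/3)"
proof -
  show "Y > 0" unfolding Y_def using assms by simp
  have a: "(x powr (1/3))^3 = x" using assms by (simp add: powr_power)
  have b: "(t powr (2/3))^3 = t\<^sup>2" using assms by (simp add: powr_power powr_numeral)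
  show "Y^3 = x / t\<^sup>2" unfolding Y_def power_divide a b ..
  have c: "(x powr (1/3))^4 = x powr (4/3)" using assms by (simp add: powr_power)
  have d: "(t powr (2/3))^4 = t\<^sup>2 * t powr (2/3)"
  proof -
    have "(t powr (2/3))^4 = t powr (2 + 2/3)" using assms by (simp add: powr_power)
    also have "\<dots> = t powr 2 * t powr (2/3)" by (rule powr_add)
    also have "\<dots> = t\<^sup>2 * t powr (2/3)" using assms by (simp add: powr_numeral)
    finally show ?thesis .
  qed
  show "t\<^sup>2 * Y^4 = x powr (4/3) / t powr (2/3)"
    unfolding Y_def power_divide c d using assms by simp
qed


context
  fixes a b t :: real
  assumes ab: "0 \<le> a" "a \<le> b" "b \<le> 1" and tt: "t \<ge> 1/200"
begin

lemma GI_eq: "(GI::real) = (LINT r|lborel. exp (- (r\<^sup>2/2)) * (1 + r\<^sup>2))"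
  by (rule GI_def[OF ab tt])

lemma GI_nonneg: "(GI::real) \<ge> 0"
  unfolding GI_eq by (intro integral_nonneg_AE) auto

lemma Dg_crude: "norm (Dg a b t u) \<le> (1/(2*pi)) * GI * exp 10000 * (t * exp (t\<^sup>2 * (9/16 - (max (1/4 - b) 0)\<^sup>2)))"
proof -
  define Ch where "Ch = t * exp (t\<^sup>2 * (9/16 - (max (1/4 - b) 0)\<^sup>2)) * exp 10000"
  have Ch0: "Ch \<ge> 0" unfolding Ch_def using tt by simp
  have pt: "norm (complex_of_real (h_t a b t r) * (\<i> * complex_of_real r) * exp (\<i> * complex_of_real (r*u)))
      \<le> Ch * (exp (- (r\<^sup>2/2)) * (1 + r\<^sup>2))" for r
  proof -
    have "\<bar>h_t a b t r\<bar> * \<bar>r\<bar> \<le> (Ch * exp (- (r\<^sup>2/2))) * (1 + r\<^sup>2)"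
      using h_bound[OF ab tt, of r] abs_le_sq[OF ab tt, of r] Ch0 unfolding Ch_def
      by (intro mult_mono) auto
    then show ?thesis by (simp add: norm_mult mult.assoc)
  qed
  have "norm (LINT r|lborel. complex_of_real (h_t a b t r) * (\<i> * complex_of_real r) * exp (\<i> * complex_of_real (r*u)))
      \<le> (LINT r|lborel. Ch * (exp (- (r\<^sup>2/2)) * (1 + r\<^sup>2)))"
    by (rule Bochner_Integration.integral_norm_bound_integral[OF int2[OF ab tt] integrable_gauss_maj]) (use pt in auto)
  also have "\<dots> = Ch * GI" unfolding GI_eq by simp
  finally have 1: "norm (LINT r|lborel. complex_of_real (h_t a b t r) * (\<i> * complex_of_real r) * exp (\<i> * complex_of_real (r*u))) \<le> Ch * GI" .
  have "norm (Dg a b t u) = 1/(2*pi) * norm (LINT r|lborel. complex_of_real (h_t a b t r) * (\<i> * complex_of_real r) * exp (\<i> * complex_of_real (r*u)))"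
    unfolding Dg_def norm_mult by (simp only: norm_of_real) simp
  also have "\<dots> \<le> 1/(2*pi) * (Ch * GI)" using 1 by (intro mult_left_mono) auto
  finally show ?thesis unfolding Ch_def by (simp add: algebra_simps)
qed

lemma Dg_con:
  assumes u: "0 < u" and Y: "Y > 0" "Y^3 \<ge> 30" "u = t\<^sup>2 * Y^3"
  shows "norm (Dg a b t u) \<le> (1/(2*pi)) * GI * exp 20000 * 1280001 * (t * exp (- (t\<^sup>2 * (max (1/4 - b) 0)\<^sup>2)) * exp (- (t\<^sup>2 * Y^4/8)))"
proof -
  define y where "y = Y/4"
  define K where "K = 81/4 * y^4 + y\<^sup>2/2 + 9/16"
  define P where "P = (1/(2*pi)) * GI * exp 20000 * (t * exp (- (t\<^sup>2 * (max (1/4 - b) 0)\<^sup>2)))"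
  have P0: "P \<ge> 0" unfolding P_def using GI_nonneg tt by (intro mult_nonneg_nonneg) auto
  have y0: "y > 0" unfolding y_def using Y by simp
  have "norm (Dg a b t u) \<le> (1/(2*pi)) * ((((1 + y) * (t * exp (- (t\<^sup>2 * (max (1/4 - b) 0)\<^sup>2)) * exp (t\<^sup>2 * K))) * exp 20000 * exp (- (y*u))) * GI)"
    unfolding K_def by (rule Dg_contour[OF ab tt u y0])
  also have "\<dots> = P * ((1 + y) * (exp (t\<^sup>2 * K) * exp (- (y*u))))"
    unfolding P_def by (simp add: field_simps)
  also have "\<dots> \<le> P * ((1 + y) * (exp (- (t\<^sup>2 * Y^4/8)) * exp (- (t\<^sup>2 * Y^4/32))))"
  proof (rule mult_left_mono[OF _ P0])
    have "K - y * Y^3 \<le> - (Y^4/8) - Y^4/32" unfolding K_def y_def using E3[OF Y(1,2)] by simp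
    then have "t\<^sup>2 * (K - y * Y^3) \<le> t\<^sup>2 * (- (Y^4/8) - Y^4/32)" by (intro mult_left_mono) auto
    then have "t\<^sup>2 * K + (- (y*u)) \<le> (- (t\<^sup>2 * Y^4/8)) + (- (t\<^sup>2 * Y^4/32))"
      unfolding Y(3) by (simp add: algebra_simps)
    then have h: "exp (t\<^sup>2 * K + (- (y*u))) \<le> exp ((- (t\<^sup>2 * Y^4/8)) + (- (t\<^sup>2 * Y^4/32)))" by simp
    show "(1 + y) * (exp (t\<^sup>2 * K) * exp (- (y*u))) \<le> (1 + y) * (exp (- (t\<^sup>2 * Y^4/8)) * exp (- (t\<^sup>2 * Y^4/32)))"
    proof -
      have ex: "exp (t\<^sup>2 * K) * exp (- (y*u)) \<le> exp (- (t\<^sup>2 * Y^4/8)) * exp (- (t\<^sup>2 * Y^4/32))"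
        using h by (simp only: exp_add)
      show ?thesis by (rule mult_left_mono[OF ex]) (use y0 in simp)
    qed
  qed
  also have "\<dots> = P * (((1 + Y/4) * exp (- (t\<^sup>2 * Y^4/32))) * exp (- (t\<^sup>2 * Y^4/8)))"
    unfolding y_def by (simp add: algebra_simps)
  also have "\<dots> \<le> P * (1280001 * exp (- (t\<^sup>2 * Y^4/8)))"
  proof (intro mult_left_mono mult_right_mono P0 E4 tt)
    show "1 \<le> Y"
    proof (rule ccontr)
      assume "\<not> 1 \<le> Y"
      then have "Y^3 < 1^3" using Y by (intro power_strict_mono) auto
      then show False using Y by simp
    qed
  qed auto
  finally show ?thesis unfolding P_def by (simp add: algebra_simps)
qed

lemma K_norm:
  assumes r: "0 < r" "r < 3" "r \<le> rho" and M: "0 \<le> M" and fb: "\<And>u. rho < u \<Longrightarrow> norm (Dg a b t u) \<le> M"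
  shows "norm (K_t a b t rho) \<le> (1/(sqrt 2 * pi)) * (M * (100/r\<^sup>2) * exp (- rho/2))"
proof -
  have vd: "(\<lambda>u. vector_derivative (g_t a b t) (at u)) = Dg a b t" by (simp add: fun_eq_iff g_vd[OF ab tt])
  have "norm (K_t a b t rho) = (1/(sqrt 2 * pi)) * norm (LINT u:{rho<..}|lborel. Dg a b t u / complex_of_real (sqrt (cosh u - cosh rho)))"
    unfolding K_t_def norm_mult by (simp only: norm_of_real) (simp add: g_vd[OF ab tt])
  also have "\<dots> \<le> (1/(sqrt 2 * pi)) * (M * (sqrt (7/r) * exp (- rho/2) * 2 + 4 * (exp (- (1/2) * (rho+1)) / (1/2))))"
    by (intro mult_left_mono kernel_bound[OF r M fb]) auto
  also have "\<dots> \<le> (1/(sqrt 2 * pi)) * (M * (100/r\<^sup>2) * exp (- rho/2))"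
  proof (intro mult_left_mono)
    have "7/r \<le> (14/r\<^sup>2)\<^sup>2"
    proof -
      have "r^3 \<le> 3^3" using r by (intro power_mono) auto
      then have "7 * r^3 \<le> 196" by simp
      then show ?thesis using r by (simp add: field_simps power2_eq_square power3_eq_cube)
    qed
    then have "sqrt (7/r) \<le> sqrt ((14/r\<^sup>2)\<^sup>2)" by (rule real_sqrt_le_mono)
    moreover have "sqrt ((14/r\<^sup>2)\<^sup>2) = 14/r\<^sup>2" using r by simp
    ultimately have s7: "sqrt (7/r) \<le> 14/r\<^sup>2" by simp
    have "r\<^sup>2 \<le> 3\<^sup>2" using r by (intro power_mono) auto
    then have r2: "r\<^sup>2 \<le> 9" by simp
    have "8 \<le> 72 / r\<^sup>2" using r r2 by (simp add: field_simps)
    have ee: "exp (- (1/2) * (rho+1)) \<le> exp (- rho/2)" by simp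
    have "sqrt (7/r) * exp (- rho/2) * 2 + 4 * (exp (- (1/2) * (rho+1)) / (1/2)) \<le> (14/r\<^sup>2) * exp (- rho/2) * 2 + 8 * exp (- rho/2)"
      using s7 ee by (intro add_mono mult_right_mono) auto
    also have "\<dots> = (28/r\<^sup>2 + 8) * exp (- rho/2)" by (simp add: algebra_simps)
    also have "\<dots> \<le> (28/r\<^sup>2 + 72/r\<^sup>2) * exp (- rho/2)" using \<open>8 \<le> 72 / r\<^sup>2\<close> by (intro mult_right_mono) auto
    also have "\<dots> = (100/r\<^sup>2) * exp (- rho/2)" by (simp add: field_simps)
    finally have X: "sqrt (7/r) * exp (- rho/2) * 2 + 4 * (exp (- (1/2) * (rho+1)) / (1/2)) \<le> (100/r\<^sup>2) * exp (- rho/2)" .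
    show "M * (sqrt (7/r) * exp (- rho/2) * 2 + 4 * (exp (- (1/2) * (rho+1)) / (1/2))) \<le> M * (100/r\<^sup>2) * exp (- rho/2)"
      using mult_left_mono[OF X M] by (simp only: mult.assoc)
  qed auto
  finally show ?thesis .
qed

end


lemma fin:
  fixes nK c1 C q e1 e2 :: real
  assumes "0 \<le> c1" "c1 \<le> C" "0 \<le> q" "e1 \<le> e2" "nK \<le> c1 * q * exp e1"
  shows "nK \<le> C * (q * exp e2)"
proof -
  have "c1 * q * exp e1 \<le> c1 * q * exp e2" using assms by (intro mult_left_mono) auto
  also have "\<dots> \<le> C * q * exp e2" using assms by (intro mult_right_mono) auto
  finally show ?thesis using assms by (simp add: mult.assoc)
qed


theorem lemma3p6:
  shows "\<exists>C::real. \<forall>a b r rho t :: real.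
     0 \<le> a \<and> a \<le> b \<and> b \<le> 1 \<and> 0 < r \<and> r < 3 \<and> rho \<ge> r \<and> t \<ge> 1/200 \<longrightarrow>
       (rho \<ge> 6 * t\<^sup>2 \<longrightarrow>
          cmod (K_t a b t rho) \<le> C * (t / r\<^sup>2 *
            exp (- (t\<^sup>2 * (max (1/4 - b) 0)\<^sup>2) - rho powr (4/3) / (8 * t powr (2/3))))) \<and>
       (rho \<le> 6 * t\<^sup>2 \<longrightarrow>
          cmod (K_t a b t rho) \<le> C * (t / r\<^sup>2 *
            exp (- (t\<^sup>2 * (max (1/4 - b) 0)\<^sup>2) + t\<^sup>2 - rho powr (4/3) / (8 * t powr (2/3)))))"
proof -
  define Ccr where "Ccr = (1/(2*pi)) * (GI::real) * exp 10000"
  define Ccon where "Ccon = (1/(2*pi)) * (GI::real) * exp 20000 * 1280001"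
  define CK where "CK = 1/(sqrt 2 * pi)"
  define C where "C = CK * 100 * (Ccr + Ccon)"
  show ?thesis
  proof (intro exI[of _ C] allI impI conjI)
    fix a b r rho t :: real
    assume H: "0 \<le> a \<and> a \<le> b \<and> b \<le> 1 \<and> 0 < r \<and> r < 3 \<and> rho \<ge> r \<and> t \<ge> 1/200"
    then have ab: "0 \<le> a" "a \<le> b" "b \<le> 1" and tt: "t \<ge> 1/200" and rr: "0 < r" "r < 3" "r \<le> rho" by auto
    define d where "d = max (1/4 - b) 0"
    have t0: "t > 0" using tt by simp
    have rho0: "rho > 0" using rr by simp
    have GI0: "(GI::real) \<ge> 0" by (rule GI_nonneg[OF ab tt])
    have Ccr0: "Ccr \<ge> 0" unfolding Ccr_def using GI0 by simp
    have Ccon0: "Ccon \<ge> 0" unfolding Ccon_def using GI0 by simp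
    have CK0: "CK \<ge> 0" unfolding CK_def by simp
    have q0: "t / r\<^sup>2 \<ge> 0" using t0 by simp
    have c0cr: "0 \<le> CK * 100 * Ccr" using CK0 Ccr0 by simp
    have c0con: "0 \<le> CK * 100 * Ccon" using CK0 Ccon0 by simp
    have Csum: "C = CK * 100 * Ccr + CK * 100 * Ccon" unfolding C_def by (simp add: distrib_left)
    have c1cr: "CK * 100 * Ccr \<le> C" using Csum c0con by simp
    have c1con: "CK * 100 * Ccon \<le> C" using Csum c0cr by simp
    define Y where "Y = rho powr (1/3) / t powr (2/3)"
    have Y0: "Y > 0" and Y3: "Y^3 = rho / t\<^sup>2" and Y4: "t\<^sup>2 * Y^4 = rho powr (4/3) / t powr (2/3)"
      using Ypowr[OF rho0 t0] unfolding Y_def by auto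
    have rhoY: "rho = t\<^sup>2 * Y^3" using Y3 t0 by simp
    have EqP: "rho powr (4/3) / (8 * t powr (2/3)) = t\<^sup>2 * Y^4 / 8" using Y4 by simp
    have crude: "norm (K_t a b t rho) \<le> (CK * 100 * Ccr) * (t / r\<^sup>2) * exp (t\<^sup>2 * (9/16 - d\<^sup>2) - rho/2)"
    proof -
      have M0: "Ccr * (t * exp (t\<^sup>2 * (9/16 - d\<^sup>2))) \<ge> 0" using Ccr0 t0 by simp
      have "norm (K_t a b t rho) \<le> CK * ((Ccr * (t * exp (t\<^sup>2 * (9/16 - d\<^sup>2)))) * (100/r\<^sup>2) * exp (- rho/2))"
        unfolding CK_def
        by (rule K_norm[OF ab tt rr M0]) (use Dg_crude[OF ab tt] in \<open>simp add: Ccr_def d_def mult.assoc\<close>)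
      also have "\<dots> = (CK * 100 * Ccr) * (t / r\<^sup>2) * (exp (t\<^sup>2 * (9/16 - d\<^sup>2)) * exp (- rho/2))"
        by (simp add: field_simps)
      also have "exp (t\<^sup>2 * (9/16 - d\<^sup>2)) * exp (- rho/2) = exp (t\<^sup>2 * (9/16 - d\<^sup>2) + (- rho/2))"
        by (rule exp_add[symmetric])
      also have "t\<^sup>2 * (9/16 - d\<^sup>2) + (- rho/2) = t\<^sup>2 * (9/16 - d\<^sup>2) - rho/2" by simp
      finally show ?thesis .
    qed
    have crude_exp: "t\<^sup>2 * (9/16 - d\<^sup>2) - rho/2 = - (t\<^sup>2 * d\<^sup>2) + t\<^sup>2 * (9/16 - Y^3/2)"
      unfolding rhoY by (simp add: algebra_simps)
    show "rho \<ge> 6 * t\<^sup>2 \<Longrightarrow> cmod (K_t a b t rho) \<le> C * (t / r\<^sup>2 *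
            exp (- (t\<^sup>2 * (max (1/4 - b) 0)\<^sup>2) - rho powr (4/3) / (8 * t powr (2/3))))"
    proof -
      assume big: "rho \<ge> 6 * t\<^sup>2"
      have Y36: "Y^3 \<ge> 6"
      proof -
        have "6 * t\<^sup>2 \<le> Y^3 * t\<^sup>2" using big rhoY by (simp add: mult.commute)
        then show ?thesis by (rule mult_right_le_imp_le) (use t0 in simp)
      qed
      show ?thesis
      proof (cases "Y^3 \<ge> 30")
        case True
        define M where "M = Ccon * (t * exp (- (t\<^sup>2 * d\<^sup>2)) * exp (- (t\<^sup>2 * Y^4/8)))"
        have M0: "M \<ge> 0" unfolding M_def using Ccon0 t0 by simp
        have fb: "norm (Dg a b t u) \<le> M" if u: "rho < u" for u
        proof -
          have u0: "u > 0" using u rho0 by simp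
          define Yu where "Yu = u powr (1/3) / t powr (2/3)"
          have Yu0: "Yu > 0" and Yu3: "Yu^3 = u / t\<^sup>2"
            using Ypowr[OF u0 t0] unfolding Yu_def by auto
          have "Y^3 \<le> Yu^3" unfolding Y3 Yu3 using u t0 by (simp add: divide_right_mono)
          then have YY: "Y \<le> Yu"
          proof -
            assume h: "Y^3 \<le> Yu^3"
            show ?thesis
            proof (rule ccontr)
              assume "\<not> Y \<le> Yu"
              then have "Yu^3 < Y^3" using Yu0 by (intro power_strict_mono) auto
              with h show False by simp
            qed
          qed
          have Yu30: "Yu^3 \<ge> 30" using True \<open>Y^3 \<le> Yu^3\<close> by simp
          have uY: "u = t\<^sup>2 * Yu^3" using Yu3 t0 by simp
          have "norm (Dg a b t u) \<le> (1/(2*pi)) * GI * exp 20000 * 1280001 * (t * exp (- (t\<^sup>2 * d\<^sup>2)) * exp (- (t\<^sup>2 * Yu^4/8)))"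
            using Dg_con[OF ab tt u0 Yu0 Yu30 uY] unfolding d_def .
          also have "\<dots> = Ccon * (t * exp (- (t\<^sup>2 * d\<^sup>2)) * exp (- (t\<^sup>2 * Yu^4/8)))"
            unfolding Ccon_def by (simp only: mult.assoc)
          also have "\<dots> \<le> M"
            unfolding M_def
          proof (rule mult_left_mono[OF _ Ccon0])
            have "Y^4 \<le> Yu^4" using YY Y0 by (intro power_mono) auto
            then have "t\<^sup>2 * Y^4/8 \<le> t\<^sup>2 * Yu^4/8" by (intro divide_right_mono mult_left_mono) auto
            then show "t * exp (- (t\<^sup>2 * d\<^sup>2)) * exp (- (t\<^sup>2 * Yu^4/8)) \<le> t * exp (- (t\<^sup>2 * d\<^sup>2)) * exp (- (t\<^sup>2 * Y^4/8))"
              using t0 by (intro mult_left_mono) auto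
          qed
          finally show ?thesis .
        qed
        have "norm (K_t a b t rho) \<le> CK * (M * (100/r\<^sup>2) * exp (- rho/2))"
          unfolding CK_def by (rule K_norm[OF ab tt rr M0 fb])
        also have "\<dots> \<le> CK * (M * (100/r\<^sup>2) * 1)"
          using CK0 M0 rho0 by (intro mult_left_mono) auto
        also have "\<dots> = (CK * 100 * Ccon) * (t / r\<^sup>2) * (exp (- (t\<^sup>2 * d\<^sup>2)) * exp (- (t\<^sup>2 * Y^4/8)))"
          unfolding M_def by (simp add: field_simps)
        also have "exp (- (t\<^sup>2 * d\<^sup>2)) * exp (- (t\<^sup>2 * Y^4/8)) = exp (- (t\<^sup>2 * d\<^sup>2) + (- (t\<^sup>2 * Y^4/8)))"
          by (rule exp_add[symmetric])
        also have "- (t\<^sup>2 * d\<^sup>2) + (- (t\<^sup>2 * Y^4/8)) = - (t\<^sup>2 * d\<^sup>2) - t\<^sup>2 * Y^4/8" by simp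
        finally have 1: "norm (K_t a b t rho) \<le> (CK * 100 * Ccon) * (t / r\<^sup>2) * exp (- (t\<^sup>2 * d\<^sup>2) - t\<^sup>2 * Y^4/8)" .
        show ?thesis unfolding EqP d_def[symmetric]
          by (rule fin[OF c0con c1con q0 _ 1]) simp
      next
        case False
        have "t\<^sup>2 * (9/16 - Y^3/2) \<le> t\<^sup>2 * (- (Y^4/8))"
          using E2[OF Y0 Y36] False by (intro mult_left_mono) auto
        then have e: "t\<^sup>2 * (9/16 - d\<^sup>2) - rho/2 \<le> - (t\<^sup>2 * d\<^sup>2) - t\<^sup>2 * Y^4/8"
          unfolding crude_exp by (simp add: algebra_simps)
        show ?thesis unfolding EqP d_def[symmetric]
          by (rule fin[OF c0cr c1cr q0 e crude])
      qed
    qed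
    show "rho \<le> 6 * t\<^sup>2 \<Longrightarrow> cmod (K_t a b t rho) \<le> C * (t / r\<^sup>2 *
            exp (- (t\<^sup>2 * (max (1/4 - b) 0)\<^sup>2) + t\<^sup>2 - rho powr (4/3) / (8 * t powr (2/3))))"
    proof -
      assume small: "rho \<le> 6 * t\<^sup>2"
      have Y36: "Y^3 \<le> 6"
      proof -
        have "Y^3 * t\<^sup>2 \<le> 6 * t\<^sup>2" using small rhoY by (simp add: mult.commute)
        then show ?thesis by (rule mult_right_le_imp_le) (use t0 in simp)
      qed
      have "t\<^sup>2 * (9/16 - Y^3/2) \<le> t\<^sup>2 * (1 - Y^4/8)"
        using E1[OF Y0 Y36] by (intro mult_left_mono) auto
      then have e: "t\<^sup>2 * (9/16 - d\<^sup>2) - rho/2 \<le> - (t\<^sup>2 * d\<^sup>2) + t\<^sup>2 - t\<^sup>2 * Y^4/8"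
        unfolding crude_exp by (simp add: algebra_simps)
      show ?thesis unfolding EqP d_def[symmetric]
        by (rule fin[OF c0cr c1cr q0 e crude])
    qed
  qed
qed

end
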